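(* Let $\phi$ be a formula of $\mathsf{BSML}^{\sqcup}$ or of $\mathsf{BSML}^{\oslash}$. If $\phi$ is not valid, then there is a model $M=(W,R,V)$ with $W$ finite and a state $s\subseteq W$ such that $M,s\not\models\phi$.
   Context: Formulas: $\phi ::= p \mid \neg\phi \mid (\phi\wedge\phi) \mid (\phi\vee\phi) \mid \Diamond\phi \mid \mathrm{NE}$ for $\mathsf{BSML}$; $\mathsf{BSML}^{\sqcup}$ adds $\phi\sqcup\phi$, $\mathsf{BSML}^{\oslash}$ adds $\oslash\phi$. Models $M=(W,R,V)$: $W\ne\emptyset$, $R\subseteq W\times W$, $V$ a valuation; states are subsets of $W$; $R[w]=\{v:wRv\}$. Support/anti-support: $s\models p$ iff $s\subseteq V(p)$; $s\dashv p$ iff $s\cap V(p)=\emptyset$; $s\models\mathrm{NE}$ iff $s\ne\emptyset$; $s\dashv\mathrm{NE}$ iff $s=\emptyset$; $s\models\neg\phi$ iff $s\dashv\phi$; $s\dashv\neg\phi$ iff $s\models\phi$; $s\models\phi\wedge\psi$ iff both; $s\dashv\phi\wedge\psi$ iff $s=t\cup u$ with $t\dashv\phi$, $u\dashv\psi$; $s\models\phi\vee\psi$ iff $s=t\cup u$ with $t\models\phi$, $u\models\psi$; $s\dashv\phi\vee\psi$ iff $s\dashv\phi$ and $s\dashv\psi$; $s\models\phi\sqcup\psi$ iff $s\models\phi$ or $s\models\psi$; $s\dashv\phi\sqcup\psi$ iff $s\dashv\phi$ and $s\dashv\psi$; $s\models\Diamond\phi$ iff each $w\in s$ has a nonempty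 $t\subseteq R[w]$ with $t\models\phi$; $s\dashv\Diamond\phi$ iff $R[w]\dashv\phi$ for all $w\in s$; $s\models\oslash\phi$ iff $s\models\phi$ or $s=\emptyset$; $s\dashv\oslash\phi$ iff $s\dashv\phi$. $\phi$ is valid if $M,s\models\phi$ for every model $M$ and every state $s$ on $M$. *)

theory Defs
  imports Main
begin

text \<open>Formulas of BSML extended with both global disjunction (Gor) and the
  emptiness operator (Empt); the sublanguages are carved out by predicates.\<close>

datatype 'p form =
    Prop 'p
  | Neg "'p form"
  | Conj "'p form" "'p form"
  | Disj "'p form" "'p form"
  | Dia "'p form"
  | NE
  | Gor "'p form" "'p form"
  | Empt "'p form"

fun no_empt :: "'p form \<Rightarrow> bool" where
  "no_empt (Prop p) = True"
| "no_empt (Neg a) = no_empt a"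
| "no_empt (Conj a b) = (no_empt a \<and> no_empt b)"
| "no_empt (Disj a b) = (no_empt a \<and> no_empt b)"
| "no_empt (Dia a) = no_empt a"
| "no_empt NE = True"
| "no_empt (Gor a b) = (no_empt a \<and> no_empt b)"
| "no_empt (Empt a) = False"

fun no_gor :: "'p form \<Rightarrow> bool" where
  "no_gor (Prop p) = True"
| "no_gor (Neg a) = no_gor a"
| "no_gor (Conj a b) = (no_gor a \<and> no_gor b)"
| "no_gor (Disj a b) = (no_gor a \<and> no_gor b)"
| "no_gor (Dia a) = no_gor a"
| "no_gor NE = True"
| "no_gor (Gor a b) = False"
| "no_gor (Empt a) = no_gor a"

definition BSML_gor :: "'p form \<Rightarrow> bool" where
  "BSML_gor \<phi> = no_empt \<phi>"

definition BSML_empt :: "'p form \<Rightarrow> bool" where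
  "BSML_empt \<phi> = no_gor \<phi>"

definition is_model :: "'w set \<Rightarrow> ('w \<times> 'w) set \<Rightarrow> ('p \<Rightarrow> 'w set) \<Rightarrow> bool" where
  "is_model W R V \<longleftrightarrow> W \<noteq> {} \<and> R \<subseteq> W \<times> W \<and> (\<forall>p. V p \<subseteq> W)"

text \<open>sem W R V True s phi: s supports phi;  sem W R V False s phi: s anti-supports phi.\<close>
fun sem :: "'w set \<Rightarrow> ('w \<times> 'w) set \<Rightarrow> ('p \<Rightarrow> 'w set) \<Rightarrow> bool \<Rightarrow> 'w set \<Rightarrow> 'p form \<Rightarrow> bool" where
  "sem W R V True s (Prop p) = (s \<subseteq> V p)"
| "sem W R V False s (Prop p) = (s \<inter> V p = {})"
| "sem W R V True s NE = (s \<noteq> {})"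
| "sem W R V False s NE = (s = {})"
| "sem W R V b s (Neg a) = sem W R V (\<not> b) s a"
| "sem W R V True s (Conj a c) = (sem W R V True s a \<and> sem W R V True s c)"
| "sem W R V False s (Conj a c) =
     (\<exists>t u. s = t \<union> u \<and> sem W R V False t a \<and> sem W R V False u c)"
| "sem W R V True s (Disj a c) =
     (\<exists>t u. s = t \<union> u \<and> sem W R V True t a \<and> sem W R V True u c)"
| "sem W R V False s (Disj a c) = (sem W R V False s a \<and> sem W R V False s c)"
| "sem W R V True s (Gor a c) = (sem W R V True s a \<or> sem W R V True s c)"
| "sem W R V False s (Gor a c) = (sem W R V False s a \<and> sem W R V False s c)"
| "sem W R V True s (Dia a) =
     (\<forall>w\<in>s. \<exists>t. t \<noteq> {} \<and> t \<subseteq> R `` {w} \<and> sem W R V True t a)"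
| "sem W R V False s (Dia a) = (\<forall>w\<in>s. sem W R V False (R `` {w}) a)"
| "sem W R V True s (Empt a) = (sem W R V True s a \<or> s = {})"
| "sem W R V False s (Empt a) = sem W R V False s a"

definition valid :: "'w itself \<Rightarrow> 'p form \<Rightarrow> bool" where
  "valid (_ :: 'w itself) \<phi> \<longleftrightarrow>
     (\<forall>(W :: 'w set) R V s. is_model W R V \<and> s \<subseteq> W \<longrightarrow> sem W R V True s \<phi>)"

end

theory Submission
  imports Defs "HOL-Library.FSet"
begin

datatype 'p ty = Ty "'p set" "'p ty fset"

fun lab :: "'p ty \<Rightarrow> 'p set" where "lab (Ty A S) = A"

fun tp :: "'p set \<Rightarrow> ('w\<times>'w) set \<Rightarrow> ('p \<Rightarrow> 'w set) \<Rightarrow> nat \<Rightarrow> 'w \<Rightarrow> 'p ty" where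
  "tp P R V 0 w = Ty {p\<in>P. w \<in> V p} {||}"
| "tp P R V (Suc k) w = Ty {p\<in>P. w \<in> V p} (Abs_fset (tp P R V k ` (R``{w})))"

fun Types :: "'p set \<Rightarrow> nat \<Rightarrow> 'p ty set" where
  "Types P 0 = (\<lambda>A. Ty A {||}) ` Pow P"
| "Types P (Suc k) = (\<lambda>(A,S). Ty A S) ` (Pow P \<times> {S. fset S \<subseteq> Types P k})"

fun atoms :: "'p form \<Rightarrow> 'p set" where
  "atoms (Prop p) = {p}"
| "atoms (Neg a) = atoms a"
| "atoms (Conj a b) = atoms a \<union> atoms b"
| "atoms (Disj a b) = atoms a \<union> atoms b"
| "atoms (Dia a) = atoms a"
| "atoms NE = {}"
| "atoms (Gor a b) = atoms a \<union> atoms b"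
| "atoms (Empt a) = atoms a"

fun dep :: "'p form \<Rightarrow> nat" where
  "dep (Prop p) = 0"
| "dep (Neg a) = dep a"
| "dep (Conj a b) = max (dep a) (dep b)"
| "dep (Disj a b) = max (dep a) (dep b)"
| "dep (Dia a) = Suc (dep a)"
| "dep NE = 0"
| "dep (Gor a b) = max (dep a) (dep b)"
| "dep (Empt a) = dep a"

lemma finite_atoms: "finite (atoms \<phi>)"
  by (induction \<phi>) auto

lemma finite_fsets: "finite X \<Longrightarrow> finite {S. fset S \<subseteq> X}"
proof -
  assume "finite X"
  have "{S. fset S \<subseteq> X} \<subseteq> Abs_fset ` Pow X"
  proof
    fix S assume "S \<in> {S. fset S \<subseteq> X}"
    then show "S \<in> Abs_fset ` Pow X"
      by (intro image_eqI[of _ _ "fset S"]) (simp_all add: fset_inverse)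
  qed
  then show ?thesis using \<open>finite X\<close> by (meson finite_Pow_iff finite_imageI finite_subset)
qed

lemma finite_Types: "finite P \<Longrightarrow> finite (Types P k)"
  by (induction k) (auto simp: finite_fsets)

lemma tp_in: "finite P \<Longrightarrow> tp P R V k w \<in> Types P k"
proof (induction k arbitrary: w)
  case 0
  then show ?case by auto
next
  case (Suc k)
  have sub: "tp P R V k ` (R``{w}) \<subseteq> Types P k" using Suc by auto
  then have fin: "finite (tp P R V k ` (R``{w}))" using finite_Types[OF Suc.prems] finite_subset by blast
  have "fset (Abs_fset (tp P R V k ` (R``{w}))) = tp P R V k ` (R``{w})"
    using fin by (simp add: Abs_fset_inverse)
  then show ?case using sub
    by (auto intro!: image_eqI[of _ _ "({p\<in>P. w \<in> V p}, Abs_fset (tp P R V k ` (R``{w})))"])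
qed

lemma tp_Suc_eq:
  assumes "finite P" "tp P R V (Suc k) w = tp P R' V' (Suc k) w'"
  shows "tp P R V k ` (R``{w}) = tp P R' V' k ` (R'``{w'})"
proof -
  have f1: "finite (tp P R V k ` (R``{w}))"
    using tp_in[OF assms(1)] finite_Types[OF assms(1)] by (meson finite_subset image_subsetI)
  have f2: "finite (tp P R' V' k ` (R'``{w'}))"
    using tp_in[OF assms(1)] finite_Types[OF assms(1)] by (meson finite_subset image_subsetI)
  have "Abs_fset (tp P R V k ` (R``{w})) = Abs_fset (tp P R' V' k ` (R'``{w'}))"
    using assms(2) by simp
  then have "fset (Abs_fset (tp P R V k ` (R``{w}))) = fset (Abs_fset (tp P R' V' k ` (R'``{w'})))"
    by simp
  then show ?thesis using f1 f2 by (simp add: Abs_fset_inverse)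
qed

lemma lab_tp: "lab (tp P R V k w) = {p\<in>P. w \<in> V p}"
  by (cases k) auto

lemma img_half:
  assumes "f ` s = g ` s'" "t \<subseteq> s"
  shows "f ` t = g ` {x\<in>s'. g x \<in> f ` t}"
proof
  show "f ` t \<subseteq> g ` {x\<in>s'. g x \<in> f ` t}"
  proof
    fix y assume "y \<in> f ` t"
    then have "y \<in> g ` s'" using assms by blast
    then obtain x where "x \<in> s'" "y = g x" by blast
    then show "y \<in> g ` {x\<in>s'. g x \<in> f ` t}" using \<open>y \<in> f ` t\<close> by blast
  qed
qed blast

lemma img_split:
  assumes "f ` s = g ` s'" "s = t \<union> u"
  shows "\<exists>t' u'. s' = t' \<union> u' \<and> f ` t = g ` t' \<and> f ` u = g ` u'"
proof (intro exI conjI)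
  have e: "g ` s' = f ` t \<union> f ` u" using assms by (metis image_Un)
  show "s' = {x\<in>s'. g x \<in> f ` t} \<union> {x\<in>s'. g x \<in> f ` u}"
  proof (rule equalityI, rule subsetI)
    fix x assume "x \<in> s'"
    then have "g x \<in> f ` t \<union> f ` u" using e by blast
    then show "x \<in> {x\<in>s'. g x \<in> f ` t} \<union> {x\<in>s'. g x \<in> f ` u}"
      using \<open>x \<in> s'\<close> by blast
  qed blast
  show "f ` t = g ` {x\<in>s'. g x \<in> f ` t}"
    using img_half[OF assms(1), of t] assms(2) by simp
  show "f ` u = g ` {x\<in>s'. g x \<in> f ` u}"
    using img_half[OF assms(1), of u] assms(2) by simp
qed

lemma img_sub:
  assumes "f ` X = g ` X'" "t \<subseteq> X"
  shows "\<exists>t'\<subseteq>X'. f ` t = g ` t'"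
proof (intro exI conjI)
  show "{x\<in>X'. g x \<in> f ` t} \<subseteq> X'" by (rule subsetI) simp
  show "f ` t = g ` {x\<in>X'. g x \<in> f ` t}" by (rule img_half[OF assms])
qed


lemma invar:
  assumes P: "finite P"
  shows "atoms \<phi> \<subseteq> P \<Longrightarrow> dep \<phi> \<le> k \<Longrightarrow> tp P R V k ` s = tp P R' V' k ` s'
    \<Longrightarrow> sem W R V b s \<phi> \<Longrightarrow> sem W' R' V' b s' \<phi>"
proof (induction \<phi> arbitrary: b s s' k)
  case (Prop p)
  have key: "\<And>w w'. tp P R V k w = tp P R' V' k w' \<Longrightarrow> (w \<in> V p \<longleftrightarrow> w' \<in> V' p)"
  proof -
    fix w w' assume "tp P R V k w = tp P R' V' k w'"
    then have "lab (tp P R V k w) = lab (tp P R' V' k w')" by simp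
    then have "{p\<in>P. w \<in> V p} = {p\<in>P. w' \<in> V' p}" by (simp add: lab_tp)
    then show "w \<in> V p \<longleftrightarrow> w' \<in> V' p" using Prop.prems(1) by auto
  qed
  have m: "\<And>w'. w' \<in> s' \<Longrightarrow> \<exists>w\<in>s. tp P R V k w = tp P R' V' k w'"
    using Prop.prems(3) by (metis imageE imageI)
  show ?case
  proof (cases b)
    case True
    then show ?thesis using Prop.prems(4) m key by (simp; blast)
  next
    case False
    then show ?thesis using Prop.prems(4) m key by (simp; blast)
  qed
next
  case NE
  then show ?case by (cases b) auto
next
  case (Neg a)
  then show ?case by simp
next
  case (Conj a c)
  show ?case
  proof (cases b)
    case True
    then show ?thesis using Conj by auto
  next
    case False
    then obtain t u where "s = t \<union> u" "sem W R V False t a" "sem W R V False u c"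
      using Conj.prems(4) by auto
    then obtain t' u' where "s' = t' \<union> u'" "tp P R V k ` t = tp P R' V' k ` t'"
        "tp P R V k ` u = tp P R' V' k ` u'"
      using img_split[OF Conj.prems(3)] by metis
    moreover have "sem W' R' V' False t' a"
      using Conj.IH(1)[OF _ _ \<open>tp P R V k ` t = tp P R' V' k ` t'\<close> \<open>sem W R V False t a\<close>] Conj.prems(1,2) by simp
    moreover have "sem W' R' V' False u' c"
      using Conj.IH(2)[OF _ _ \<open>tp P R V k ` u = tp P R' V' k ` u'\<close> \<open>sem W R V False u c\<close>] Conj.prems(1,2) by simp
    ultimately show ?thesis using False by auto
  qed
next
  case (Disj a c)
  show ?case
  proof (cases b)
    case False
    then show ?thesis using Disj by auto
  next
    case True
    then obtain t u where "s = t \<union> u" "sem W R V True t a" "sem W R V True u c"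
      using Disj.prems(4) by auto
    then obtain t' u' where "s' = t' \<union> u'" "tp P R V k ` t = tp P R' V' k ` t'"
        "tp P R V k ` u = tp P R' V' k ` u'"
      using img_split[OF Disj.prems(3)] by metis
    moreover have "sem W' R' V' True t' a"
      using Disj.IH(1)[OF _ _ \<open>tp P R V k ` t = tp P R' V' k ` t'\<close> \<open>sem W R V True t a\<close>] Disj.prems(1,2) by simp
    moreover have "sem W' R' V' True u' c"
      using Disj.IH(2)[OF _ _ \<open>tp P R V k ` u = tp P R' V' k ` u'\<close> \<open>sem W R V True u c\<close>] Disj.prems(1,2) by simp
    ultimately show ?thesis using True by auto
  qed
next
  case (Gor a c)
  then show ?case by (cases b) auto
next
  case (Empt a)
  then show ?case by (cases b) auto
next
  case (Dia a)
  obtain j where kj: "k = Suc j" "dep a \<le> j" using Dia.prems(2) by (cases k) auto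
  have m: "\<And>w'. w' \<in> s' \<Longrightarrow> \<exists>w\<in>s. tp P R V (Suc j) w = tp P R' V' (Suc j) w'"
    using Dia.prems(3) kj by (metis imageE imageI)
  show ?case
  proof (cases b)
    case True
    have "\<forall>w'\<in>s'. \<exists>t. t \<noteq> {} \<and> t \<subseteq> R' `` {w'} \<and> sem W' R' V' True t a"
    proof
      fix w' assume "w' \<in> s'"
      then obtain w where w: "w \<in> s" "tp P R V (Suc j) w = tp P R' V' (Suc j) w'" using m by blast
      have im: "tp P R V j ` (R``{w}) = tp P R' V' j ` (R'``{w'})" by (rule tp_Suc_eq[OF P w(2)])
      have "\<exists>t. t \<noteq> {} \<and> t \<subseteq> R``{w} \<and> sem W R V True t a"
        using Dia.prems(4) True w(1) by simp
      then obtain t where t: "t \<noteq> {}" "t \<subseteq> R``{w}" "sem W R V True t a"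
        by blast
      obtain t' where t': "t' \<subseteq> R'``{w'}" "tp P R V j ` t = tp P R' V' j ` t'"
        using img_sub[OF im t(2)] by blast
      have "t' \<noteq> {}" using t(1) t'(2) by auto
      moreover have "sem W' R' V' True t' a"
        using Dia.IH[OF _ kj(2) t'(2) t(3)] Dia.prems(1) by simp
      ultimately show "\<exists>t. t \<noteq> {} \<and> t \<subseteq> R' `` {w'} \<and> sem W' R' V' True t a"
        using t'(1) by blast
    qed
    then show ?thesis using True by simp
  next
    case False
    have "\<forall>w'\<in>s'. sem W' R' V' False (R'``{w'}) a"
    proof
      fix w' assume "w' \<in> s'"
      then obtain w where w: "w \<in> s" "tp P R V (Suc j) w = tp P R' V' (Suc j) w'" using m by blast
      have im: "tp P R V j ` (R``{w}) = tp P R' V' j ` (R'``{w'})" by (rule tp_Suc_eq[OF P w(2)])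
      have "sem W R V False (R``{w}) a" using Dia.prems(4) False w(1) by auto
      then show "sem W' R' V' False (R'``{w'}) a"
        using Dia.IH[OF _ kj(2) im] Dia.prems(1) by simp
    qed
    then show ?thesis using False by simp
  qed
qed


lemma transport:
  assumes inj: "inj_on f D" and RD: "R \<subseteq> D \<times> D" and VD: "\<forall>p. V p \<subseteq> D"
  shows "x \<in> D \<Longrightarrow> tp P (map_prod f f ` R) (\<lambda>p. f ` V p) k (f x) = tp P R V k x"
proof (induction k arbitrary: x)
  case 0
  have "\<And>p. f x \<in> f ` V p \<longleftrightarrow> x \<in> V p" using inj_on_image_mem_iff[OF inj] VD 0 by blast
  then show ?case by simp
next
  case (Suc k)
  have l: "\<And>p. f x \<in> f ` V p \<longleftrightarrow> x \<in> V p" using inj_on_image_mem_iff[OF inj] VD Suc.prems by blast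
  have r: "(map_prod f f ` R)``{f x} = f ` (R``{x})"
  proof (rule set_eqI)
    fix y
    show "y \<in> (map_prod f f ` R)``{f x} \<longleftrightarrow> y \<in> f ` (R``{x})"
    proof
      assume "y \<in> (map_prod f f ` R)``{f x}"
      then obtain a b where ab: "(a,b) \<in> R" "f a = f x" "y = f b" by auto
      then have "a \<in> D" using RD by auto
      then have "a = x" using inj ab(2) Suc.prems by (meson inj_onD)
      then show "y \<in> f ` (R``{x})" using ab by auto
    next
      assume "y \<in> f ` (R``{x})"
      then obtain b where "(x,b) \<in> R" "y = f b" by auto
      then show "y \<in> (map_prod f f ` R)``{f x}" by (auto intro: image_eqI[of _ _ "(x,b)"])
    qed
  qed
  have "tp P (map_prod f f ` R) (\<lambda>p. f ` V p) k ` f ` (R``{x}) = tp P R V k ` (R``{x})"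
  proof -
    have H: "\<And>b. b \<in> R``{x} \<Longrightarrow> tp P (map_prod f f ` R) (\<lambda>p. f ` V p) k (f b) = tp P R V k b"
      using Suc.IH RD by blast
    show ?thesis unfolding image_image by (rule image_cong[OF refl]) (simp add: H)
  qed
  then show ?case using l r by simp
qed

theorem proposition3p21:
  fixes \<phi> :: "'p form"
  assumes "BSML_gor \<phi> \<or> BSML_empt \<phi>"
    and "\<not> valid TYPE('w) \<phi>"
  shows "\<exists>(W :: 'w set) R V s. is_model W R V \<and> finite W \<and> s \<subseteq> W
           \<and> \<not> sem W R V True s \<phi>"
proof -
  obtain W :: "'w set" and R V s where M: "is_model W R V" "s \<subseteq> W" "\<not> sem W R V True s \<phi>"
    using assms(2) unfolding valid_def by blast
  show ?thesis
  proof (cases "finite (UNIV :: 'w set)")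
    case True
    then have "finite W" by (rule finite_subset[OF subset_UNIV])
    then show ?thesis using M by (intro exI[of _ W] exI[of _ R] exI[of _ V] exI[of _ s]) simp
  next
    case False
    define P where "P = atoms \<phi>"
    define n where "n = dep \<phi>"
    have P: "finite P" unfolding P_def by (rule finite_atoms)
    define FW where "FW = Sigma {..n} (Types P)"
    have finFW: "finite FW" unfolding FW_def
      by (rule finite_SigmaI) (simp_all add: finite_Types[OF P])
    define R0 :: "((nat \<times> 'p ty) \<times> (nat \<times> 'p ty)) set" where
      "R0 = {((Suc k, Ty A S), (k, \<sigma>)) | k A S \<sigma>. Suc k \<le> n \<and> Ty A S \<in> Types P (Suc k) \<and> \<sigma> |\<in>| S}"
    define V0 where "V0 p = {x \<in> FW. p \<in> lab (snd x)}" for p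
    have R0FW: "R0 \<subseteq> FW \<times> FW"
    proof (rule subsetI)
      fix x assume "x \<in> R0"
      then obtain k A S \<sigma> where x: "x = ((Suc k, Ty A S),(k,\<sigma>))" "Suc k \<le> n"
          "Ty A S \<in> Types P (Suc k)" "\<sigma> |\<in>| S"
        unfolding R0_def by blast
      then have "fset S \<subseteq> Types P k" by auto
      then show "x \<in> FW \<times> FW" using x unfolding FW_def by auto
    qed
    have V0FW: "\<forall>p. V0 p \<subseteq> FW" unfolding V0_def by blast
    have claim: "k \<le> n \<Longrightarrow> \<tau> \<in> Types P k \<Longrightarrow> tp P R0 V0 k (k, \<tau>) = \<tau>" for k \<tau>
    proof (induction k arbitrary: \<tau>)
      case 0
      then obtain A where A: "\<tau> = Ty A {||}" "A \<subseteq> P" by auto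
      have "(0, \<tau>) \<in> FW" using 0 unfolding FW_def by auto
      then have "\<forall>p. (0,\<tau>) \<in> V0 p \<longleftrightarrow> p \<in> A" using A unfolding V0_def by simp
      then have "{p\<in>P. (0,\<tau>) \<in> V0 p} = A" using A(2) by blast
      then show ?case using A by simp
    next
      case (Suc k)
      then obtain A S where A: "\<tau> = Ty A S" "A \<subseteq> P" "fset S \<subseteq> Types P k" by auto
      have "(Suc k, \<tau>) \<in> FW" using Suc.prems unfolding FW_def by auto
      then have "\<forall>p. (Suc k,\<tau>) \<in> V0 p \<longleftrightarrow> p \<in> A" using A unfolding V0_def by simp
      then have l: "{p\<in>P. (Suc k,\<tau>) \<in> V0 p} = A" using A(2) by blast
      have r: "R0``{(Suc k, \<tau>)} = (\<lambda>\<sigma>. (k,\<sigma>)) ` fset S"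
        using Suc.prems A unfolding R0_def by auto
      have "tp P R0 V0 k ` ((\<lambda>\<sigma>. (k,\<sigma>)) ` fset S) = fset S"
      proof -
        have H: "\<And>\<sigma>. \<sigma> \<in> fset S \<Longrightarrow> tp P R0 V0 k (k,\<sigma>) = \<sigma>"
          using Suc.IH Suc.prems(1) A(3) by auto
        have "(\<lambda>x. tp P R0 V0 k (k, x)) ` fset S = (\<lambda>x. x) ` fset S"
          by (rule image_cong[OF refl]) (simp add: H)
        then show ?thesis unfolding image_image by simp
      qed
      then show ?case using l r A(1) by (simp add: fset_inverse)
    qed
    obtain h :: "nat \<times> 'p ty \<Rightarrow> nat" and m where h: "inj_on h FW"
      using finite_imp_inj_to_nat_seg[OF finFW] by blast
    obtain g :: "nat \<Rightarrow> 'w" where g: "inj g"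
      using infinite_countable_subset[OF False] by blast
    define f where "f = g \<circ> h"
    have inj: "inj_on f FW" unfolding f_def using h g by (simp add: comp_inj_on inj_on_subset)
    define W' where "W' = f ` FW"
    define R' where "R' = map_prod f f ` R0"
    define V' where "V' p = f ` V0 p" for p
    have tr: "\<And>x k. x \<in> FW \<Longrightarrow> tp P R' V' k (f x) = tp P R0 V0 k x"
      unfolding R'_def V'_def using transport[OF inj R0FW V0FW] by blast
    have "(0, Ty {} {||}) \<in> FW" unfolding FW_def by auto
    then have mod: "is_model W' R' V'"
      unfolding is_model_def W'_def R'_def V'_def using R0FW V0FW by auto
    define s' where "s' = (\<lambda>w. f (n, tp P R V n w)) ` s"
    have s'W: "s' \<subseteq> W'"
    proof (rule subsetI)
      fix x assume "x \<in> s'"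
      then obtain w where "x = f (n, tp P R V n w)" unfolding s'_def by blast
      moreover have "(n, tp P R V n w) \<in> FW" unfolding FW_def using tp_in[OF P] by simp
      ultimately show "x \<in> W'" unfolding W'_def by blast
    qed
    have "tp P R' V' n ` s' = tp P R V n ` s"
    proof -
      have "\<And>w. tp P R' V' n (f (n, tp P R V n w)) = tp P R V n w"
      proof -
        fix w
        have "tp P R V n w \<in> Types P n" by (rule tp_in[OF P])
        then have "(n, tp P R V n w) \<in> FW" unfolding FW_def by auto
        then show "tp P R' V' n (f (n, tp P R V n w)) = tp P R V n w"
          using tr claim \<open>tp P R V n w \<in> Types P n\<close> by simp
      qed
      then show ?thesis unfolding s'_def by (simp add: image_image)
    qed
    then have "\<not> sem W' R' V' True s' \<phi>"
      using invar[OF P, where \<phi>=\<phi> and k=n and R=R' and V=V' and s=s' and R'=R and V'=V and s'=s and b=True and W=W' and W'=W] M(3) unfolding P_def n_def by auto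
    moreover have "finite W'" unfolding W'_def using finFW by simp
    ultimately show ?thesis using mod s'W by (intro exI[of _ W'] exI[of _ R'] exI[of _ V'] exI[of _ s']) simp
  qed
qed

end
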